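(* Let $G:\mathbb{R}^n\to\mathbb{R}^m$ be continuously differentiable and define $H:\mathbb{R}^n\to\mathbb{R}^{n+m}$ by $H(v)=\begin{bmatrix} v\\ G(v)\end{bmatrix}$, so that $\nabla H(v)=\begin{bmatrix}I_n\\ \nabla G(v)\end{bmatrix}$. Fix $v_{\mathrm{ref}}\in\mathbb{R}^n$ and let $\nabla G(v_{\mathrm{ref}})=\Psi\Lambda\Phi^\top$ be a reduced singular value decomposition, where $r$ is the rank of $\nabla G(v_{\mathrm{ref}})$, $\Psi\in\mathbb{R}^{m\times r}$ and $\Phi\in\mathbb{R}^{n\times r}$ have orthonormal columns, and $\Lambda\in\mathbb{R}^{r\times r}$ is diagonal with positive diagonal entries. Define $$\widetilde Q=\nabla H(v_{\mathrm{ref}})\big(\nabla H(v_{\mathrm{ref}})^\top\nabla H(v_{\mathrm{ref}})\big)^{-1/2}\in\mathbb{R}^{(n+m)\times n}$$ (the orthonormal factor of the polar decomposition of $\nabla H(v_{\mathrm{ref}})$). Then: (i) For $\xi\in\mathbb{R}^n$, the nonlinear system $\widetilde Q^\top H(v)=\xi$ is equivalent to the system $$(I_n-\Phi\Phi^\top)\xi=(I_n-\Phi\Phi^\top)v,\qquad \Phi\Phi^\top\xi=\Phi\Big[(\Lambda^2+I_r)^{-1/2}\big(\Phi^\top v+\Lambda\Psi^\top G(v)\big)\Big].$$ (ii) The function $$w(v)=\big|\det(\widetilde Q^\top\nabla H(v))\big|^{-1}\exp\Big(-\tfrac12\|H(v)\|^2+\tfrac12\|\widetilde Q^\top H(v)\|^2\Big)$$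 can be written as $$w(v)=\big|\det(\widetilde Q^\top\nabla H(v))\big|^{-1}\exp\Big(-\tfrac12\|G(v)\|^2-\tfrac12\|\Phi^\top v\|^2+\tfrac12\big\|(\Lambda^2+I_r)^{-1/2}\big(\Phi^\top v+\Lambda\Psi^\top G(v)\big)\big\|^2\Big),$$ where $$\big|\det(\widetilde Q^\top\nabla H(v))\big|=\big|\det(\Lambda^2+I_r)^{-1/2}\big|\,\big|\det\big(I_r+\Lambda\Psi^\top\nabla G(v)\Phi\big)\big|.$$
   Context: $\|\cdot\|$ denotes the Euclidean norm; $I_k$ the $k\times k$ identity matrix. The function $w$ is the importance weight (target density over RTO proposal density, up to constants) for the randomize-then-optimize (RTO) proposal built with the orthonormal basis $\widetilde Q$ of the range of $\nabla H(v_{\mathrm{ref}})$, for the target density $\pi(v)\propto\exp(-\frac12\|H(v)\|^2)$. *)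

theory Defs
  imports "HOL-Analysis.Analysis"
begin

definition diag_mat :: "real^'r \<Rightarrow> real^'r^'r" where
  "diag_mat d = (\<chi> i j. if i = j then d $ i else 0)"

definition psd :: "real^'k^'k \<Rightarrow> bool" where
  "psd S \<longleftrightarrow> transpose S = S \<and> (\<forall>x. 0 \<le> x \<bullet> (S *v x))"

definition psd_sqrt :: "real^'k^'k \<Rightarrow> real^'k^'k" where
  "psd_sqrt A = (THE S. psd S \<and> S ** S = A)"

definition inv_sqrt :: "real^'k^'k \<Rightarrow> real^'k^'k" where
  "inv_sqrt A = matrix_inv (psd_sqrt A)"

definition stackH :: "(real^'n \<Rightarrow> real^'m) \<Rightarrow> real^'n \<Rightarrow> real^('n + 'm)" where
  "stackH G v = (\<chi> i. case i of Inl j \<Rightarrow> v $ j | Inr k \<Rightarrow> G v $ k)"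

text \<open>Jacobian matrix of G at v, where G' v is the Frechet derivative of G at v.\<close>
definition jac :: "(real^'n \<Rightarrow> real^'n \<Rightarrow> real^'m) \<Rightarrow> real^'n \<Rightarrow> real^'n^'m" where
  "jac G' v = matrix (G' v)"

definition gradH :: "(real^'n \<Rightarrow> real^'n \<Rightarrow> real^'m) \<Rightarrow> real^'n \<Rightarrow> real^'n^('n + 'm)" where
  "gradH G' v = (\<chi> i j. case i of Inl a \<Rightarrow> (mat 1 :: real^'n^'n) $ a $ j
                                   | Inr k \<Rightarrow> jac G' v $ k $ j)"

definition Qtilde :: "(real^'n \<Rightarrow> real^'n \<Rightarrow> real^'m) \<Rightarrow> real^'n \<Rightarrow> real^'n^('n + 'm)" where
  "Qtilde G' vref = gradH G' vref ** inv_sqrt (transpose (gradH G' vref) ** gradH G' vref)"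

definition rto_weight ::
  "(real^'n \<Rightarrow> real^'m) \<Rightarrow> (real^'n \<Rightarrow> real^'n \<Rightarrow> real^'m) \<Rightarrow> real^'n \<Rightarrow> real^'n \<Rightarrow> real" where
  "rto_weight G G' vref v =
     inverse \<bar>det (transpose (Qtilde G' vref) ** gradH G' v)\<bar> *
     exp (- (1/2) * (norm (stackH G v))\<^sup>2
          + (1/2) * (norm (transpose (Qtilde G' vref) *v stackH G v))\<^sup>2)"

end

theory Submission
  imports Defs
begin

lemma sum_UNIV_Plus:
  "sum f (UNIV::('a::finite + 'b::finite) set) = sum (\<lambda>a. f (Inl a)) UNIV + sum (\<lambda>b. f (Inr b)) UNIV"
proof -
  have "sum f (UNIV::('a + 'b) set) = sum f (UNIV <+> UNIV)" by simp
  also have "\<dots> = sum (f \<circ> Inl) UNIV + sum (f \<circ> Inr) UNIV" by (rule sum.Plus) simp_all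
  finally show ?thesis by (simp add: comp_def)
qed

lemma prod_UNIV_Plus:
  "prod f (UNIV::('a::finite + 'b::finite) set) = prod (\<lambda>a. f (Inl a)) UNIV * prod (\<lambda>b. f (Inr b)) UNIV"
proof -
  have "prod f (UNIV::('a + 'b) set) = prod f (UNIV <+> UNIV)" by simp
  also have "\<dots> = prod (f \<circ> Inl) UNIV * prod (f \<circ> Inr) UNIV" by (rule prod.Plus) simp_all
  finally show ?thesis by (simp add: comp_def)
qed

lemma matrix_add_rdistrib: "((A + B) ** C) = (A ** C) + (B ** (C::real^_^_))"
  by (vector matrix_matrix_mult_def sum.distrib[symmetric] field_simps)
lemma matrix_diff_rdistrib: "((A - B) ** C) = (A ** C) - (B ** (C::real^_^_))"
  by (vector matrix_matrix_mult_def sum_subtractf[symmetric] field_simps)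
lemma matrix_diff_ldistrib: "(C ** (A - B)) = (C ** A) - (C ** (B::real^_^_))"
  by (vector matrix_matrix_mult_def sum_subtractf[symmetric] field_simps)
lemma matrix_neg_left: "(- A) ** (C::real^_^_) = - (A ** C)"
  by (vector matrix_matrix_mult_def sum_negf[symmetric])
lemma matrix_neg_right: "C ** (- A) = - (C ** (A::real^_^_))"
  by (vector matrix_matrix_mult_def sum_negf[symmetric])
lemma transpose_add: "transpose (A + B) = transpose A + transpose (B::real^_^_)"
  by (vector transpose_def)
lemma transpose_diff: "transpose (A - B) = transpose A - transpose (B::real^_^_)"
  by (vector transpose_def)

definition blk :: "real^'b^'a \<Rightarrow> real^'c^'a \<Rightarrow> real^'b^'d \<Rightarrow> real^'c^'d \<Rightarrow> real^('b+'c)^('a+'d)" where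
  "blk A B C D = (\<chi> i j. case i of Inl a \<Rightarrow> (case j of Inl b \<Rightarrow> A$a$b | Inr b \<Rightarrow> B$a$b)
                                 | Inr a \<Rightarrow> (case j of Inl b \<Rightarrow> C$a$b | Inr b \<Rightarrow> D$a$b))"

lemma blk_nth:
  "blk A B C D $ Inl a $ Inl b = A$a$b" "blk A B C D $ Inl a $ Inr c = B$a$c"
  "blk A B C D $ Inr d $ Inl b = C$d$b" "blk A B C D $ Inr d $ Inr c = D$d$c"
  by (simp_all add: blk_def)

lemma mm_nth: "(X ** Y) $ i $ j = sum (\<lambda>k. X$i$k * Y$k$j) UNIV"
  by (simp add: matrix_matrix_mult_def)

lemma blk_mult:
  "blk A B C D ** blk E F G H = blk (A**E + B**G) (A**F + B**H) (C**E + D**G) (C**F + D**H)"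
  unfolding vec_eq_iff
proof (intro allI)
  fix i j
  show "(blk A B C D ** blk E F G H) $ i $ j = blk (A**E + B**G) (A**F + B**H) (C**E + D**G) (C**F + D**H) $ i $ j"
    apply (cases i; cases j)
    apply (simp only: mm_nth sum_UNIV_Plus blk_nth vector_add_component)+
    done
qed

lemma transpose_blk: "transpose (blk A B C D) = blk (transpose A) (transpose C) (transpose B) (transpose D)"
  unfolding vec_eq_iff
proof (intro allI)
  fix i j
  show "transpose (blk A B C D) $ i $ j = blk (transpose A) (transpose C) (transpose B) (transpose D) $ i $ j"
    by (cases i; cases j) (simp_all add: transpose_def blk_def)
qed

lemma det_idplus:
  fixes m n :: "'k::finite"
  assumes "m \<noteq> n"
  shows "det (\<chi> i j. if i = m \<and> j = n then c else of_bool (i = j) :: real^'k^'k) = 1"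
proof -
  have "(\<chi> i j. if i = m \<and> j = n then c else of_bool (i = j) :: real^'k^'k)
      = (\<chi> k. if k = m then row m (mat 1) + c *s row n (mat 1) else row k (mat 1))"
    using assms by (auto simp: vec_eq_iff row_def mat_def)
  then show ?thesis using det_row_operation[OF assms, of "mat 1 :: real^'k^'k" c] by simp
qed

lemma det_swapmat:
  fixes m n :: "'k::finite"
  assumes "m \<noteq> n"
  shows "det (\<chi> i j. mat 1 $ i $ Transposition.transpose m n j :: real^'k^'k) = -1"
proof -
  have "(\<chi> i j. mat 1 $ i $ Transposition.transpose m n j :: real^'k^'k)
      = (\<chi> i. (mat 1 :: real^'k^'k) $ Transposition.transpose m n i)"
    by (auto simp: vec_eq_iff mat_def transpose_def Transposition.transpose_def)
  then show ?thesis
    using det_permute_rows[of "Transposition.transpose m n" "mat 1 :: real^'k^'k"] assms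
    by (simp add: permutes_swap_id sign_swap_id)
qed

lemma det_blk_diag_r: "det (blk (mat 1) 0 0 (Y::real^'r::finite^'r) :: real^('n::finite+'r::finite)^('n::finite+'r::finite)) = det Y"
proof (induction Y rule: induct_matrix_elementary)
  case (1 A B)
  have "blk (mat 1) 0 0 (A ** B) = (blk (mat 1) 0 0 A :: real^('n::finite+'r::finite)^('n::finite+'r::finite)) ** blk (mat 1) 0 0 B"
    by (simp add: blk_mult)
  then show ?case using 1 by (simp add: det_mul)
next
  case (2 A i)
  have "row (Inr i) (blk (mat 1) 0 0 A :: real^('n::finite+'r::finite)^('n::finite+'r::finite)) = 0"
    using 2 by (simp add: vec_eq_iff row_def blk_def split: sum.split)
  then show ?case using 2 det_zero_row(1) by metis
next
  case (3 A)
  have "det (blk (mat 1) 0 0 A :: real^('n::finite+'r::finite)^('n::finite+'r::finite)) = prod (\<lambda>i. (blk (mat 1) 0 0 A :: real^('n::finite+'r::finite)^('n::finite+'r::finite)) $ i $ i) UNIV"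
    by (rule det_diagonal) (auto simp: blk_def mat_def split: sum.split; metis 3)
  also have "\<dots> = prod (\<lambda>i. A $ i $ i) UNIV" by (simp add: prod_UNIV_Plus blk_nth mat_def)
  finally show ?case using det_diagonal 3 by metis
next
  case (4 m n)
  have "(blk (mat 1) 0 0 (\<chi> i j. mat 1 $ i $ Transposition.transpose m n j) :: real^('n::finite+'r::finite)^('n::finite+'r::finite))
     = (\<chi> i j. mat 1 $ i $ Transposition.transpose (Inr m) (Inr n) j)"
    by (auto simp: vec_eq_iff blk_def mat_def Transposition.transpose_def split: sum.split)
  then show ?case using 4 by (simp add: det_swapmat)
next
  case (5 m n c)
  have "(blk (mat 1) 0 0 (\<chi> i j. if i = m \<and> j = n then c else of_bool (i = j)) :: real^('n::finite+'r::finite)^('n::finite+'r::finite))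
     = (\<chi> i j. if i = Inr m \<and> j = Inr n then c else of_bool (i = j))"
    by (auto simp: vec_eq_iff blk_def mat_def split: sum.split)
  then show ?case using 5 by (simp add: det_idplus)
qed

lemma det_blk_diag_l: "det (blk (Y::real^'n::finite^'n) 0 0 (mat 1) :: real^('n::finite+'r::finite)^('n::finite+'r::finite)) = det Y"
proof (induction Y rule: induct_matrix_elementary)
  case (1 A B)
  have "blk (A ** B) 0 0 (mat 1) = (blk A 0 0 (mat 1) :: real^('n::finite+'r::finite)^('n::finite+'r::finite)) ** blk B 0 0 (mat 1)"
    by (simp add: blk_mult)
  then show ?case using 1 by (simp add: det_mul)
next
  case (2 A i)
  have "row (Inl i) (blk A 0 0 (mat 1) :: real^('n::finite+'r::finite)^('n::finite+'r::finite)) = 0"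
    using 2 by (simp add: vec_eq_iff row_def blk_def split: sum.split)
  then show ?case using 2 det_zero_row(1) by metis
next
  case (3 A)
  have "det (blk A 0 0 (mat 1) :: real^('n::finite+'r::finite)^('n::finite+'r::finite)) = prod (\<lambda>i. (blk A 0 0 (mat 1) :: real^('n::finite+'r::finite)^('n::finite+'r::finite)) $ i $ i) UNIV"
    by (rule det_diagonal) (auto simp: blk_def mat_def split: sum.split; metis 3)
  also have "\<dots> = prod (\<lambda>i. A $ i $ i) UNIV" by (simp add: prod_UNIV_Plus blk_nth mat_def)
  finally show ?case using det_diagonal 3 by metis
next
  case (4 m n)
  have "(blk (\<chi> i j. mat 1 $ i $ Transposition.transpose m n j) 0 0 (mat 1) :: real^('n::finite+'r::finite)^('n::finite+'r::finite))
     = (\<chi> i j. mat 1 $ i $ Transposition.transpose (Inl m) (Inl n) j)"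
    by (auto simp: vec_eq_iff blk_def mat_def Transposition.transpose_def split: sum.split)
  then show ?case using 4 by (simp add: det_swapmat)
next
  case (5 m n c)
  have "(blk (\<chi> i j. if i = m \<and> j = n then c else of_bool (i = j)) 0 0 (mat 1) :: real^('n::finite+'r::finite)^('n::finite+'r::finite))
     = (\<chi> i j. if i = Inl m \<and> j = Inl n then c else of_bool (i = j))"
    by (auto simp: vec_eq_iff blk_def mat_def split: sum.split)
  then show ?case using 5 by (simp add: det_idplus)
qed

lemma det_blk_upper_unit: "det (blk (mat 1) B 0 (mat 1) :: real^('n::finite+'r::finite)^('n::finite+'r::finite)) = 1"
proof -
  let ?M = "blk (mat 1) B 0 (mat 1) :: real^('n::finite+'r::finite)^('n::finite+'r::finite)"
  let ?U = "UNIV:: ('n+'r) set"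
  let ?PU = "{p. p permutes ?U}"
  let ?pp = "\<lambda>p. of_int (sign p) * prod (\<lambda>i. ?M$i$p i) ?U"
  have fU: "finite ?U" by simp
  have id0: "{id} \<subseteq> ?PU" by (auto simp: permutes_id)
  have p0: "\<forall>p \<in> ?PU - {id}. ?pp p = 0"
  proof
    fix p
    assume p: "p \<in> ?PU - {id}"
    then obtain i where i: "p i \<noteq> i" by fastforce
    have pinj: "p x = p y \<Longrightarrow> x = y" for x y using p by (metis mem_Collect_eq permutes_inj injD DiffD1)
    have "\<exists>k \<in> ?U. ?M$k$p k = 0"
    proof (cases "?M$i$p i = 0")
      case True then show ?thesis by blast
    next
      case False
      then obtain a b where ab: "i = Inl a" "p i = Inr b"
        using i by (cases i; cases "p i") (auto simp: blk_nth mat_def)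
      have "p (p i) \<noteq> p i" using i pinj by metis
      then have "?M$(p i)$p (p i) = 0" using ab
        by (cases "p (p i)") (auto simp: blk_nth mat_def)
      then show ?thesis by blast
    qed
    with prod_zero[OF fU] show "?pp p = 0" by force
  qed
  have "det ?M = ?pp id"
    using sum.mono_neutral_cong_left[OF finite_permutations[OF fU] id0 p0] unfolding det_def by simp
  also have "\<dots> = 1"
    by (simp add: sign_id prod_UNIV_Plus blk_nth mat_def)
  finally show ?thesis .
qed

lemma det_blk_lower_unit: "det (blk (mat 1) 0 C (mat 1) :: real^('n::finite+'r::finite)^('n::finite+'r::finite)) = 1"
proof -
  have z: "transpose (0::real^'a::finite^'b::finite) = 0" by (vector transpose_def)
  have "transpose (blk (mat 1) 0 C (mat 1) :: real^('n::finite+'r::finite)^('n::finite+'r::finite))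
     = blk (mat 1) (transpose C) 0 (mat 1)" by (simp add: transpose_blk z)
  then show ?thesis using det_blk_upper_unit det_transpose by metis
qed

lemma sylvester:
  fixes B :: "real^'r^'n" and C :: "real^'n^'r"
  shows "det (mat 1 + B ** C) = det (mat 1 + C ** B)"
proof -
  let ?M = "blk (mat 1) (- B) C (mat 1) :: real^('n::finite+'r::finite)^('n::finite+'r::finite)"
  have e1: "?M = blk (mat 1) 0 C (mat 1) ** (blk (mat 1) 0 0 (mat 1 + C ** B) ** blk (mat 1) (- B) 0 (mat 1))"
    by (simp add: blk_mult matrix_neg_right matrix_add_rdistrib)
  have e2: "?M = (blk (mat 1) (- B) 0 (mat 1) ** blk (mat 1 + B ** C) 0 0 (mat 1)) ** blk (mat 1) 0 C (mat 1)"
    by (simp add: blk_mult matrix_neg_left matrix_add_rdistrib matrix_add_ldistrib matrix_mul_assoc)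
  have "det ?M = det (mat 1 + C ** B)"
    unfolding e1 det_mul det_blk_lower_unit det_blk_upper_unit det_blk_diag_r by simp
  moreover have "det ?M = det (mat 1 + B ** C)"
    unfolding e2 det_mul det_blk_lower_unit det_blk_upper_unit det_blk_diag_l by simp
  ultimately show ?thesis by simp
qed

lemma inner_mat: "(A *v x) \<bullet> y = x \<bullet> (transpose A *v (y::real^_))"
  by (metis dot_lmul_matrix inner_commute transpose_matrix_vector)

lemma psd_quad_zero:
  assumes S: "psd S" and q: "x \<bullet> (S *v x) = 0"
  shows "S *v x = 0"
proof -
  define z where "z = S *v x"
  have sym: "transpose S = S" using S by (simp add: psd_def)
  define a where "a = z \<bullet> z"
  define b where "b = z \<bullet> (S *v z)"
  have b0: "0 \<le> b" using S by (simp add: psd_def b_def)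
  have xz: "x \<bullet> (S *v z) = a"
    using inner_mat[of S x z] sym by (simp add: a_def z_def inner_commute)
  define t where "t = - a / (b + 1)"
  have "0 \<le> (x + t *\<^sub>R z) \<bullet> (S *v (x + t *\<^sub>R z))" using S by (simp add: psd_def)
  also have "\<dots> = x \<bullet> (S *v x) + t * (x \<bullet> (S *v z)) + t * (z \<bullet> (S *v x)) + t * t * (z \<bullet> (S *v z))"
    by (simp add: matrix_vector_right_distrib matrix_vector_mult_scaleR inner_add_left inner_add_right algebra_simps)
  also have "\<dots> = 2 * t * a + t * t * b"
    using q xz by (simp add: z_def[symmetric] a_def b_def)
  finally have n0: "0 \<le> 2 * t * a + t * t * b" .
  have tb: "t * (b + 1) = - a" using b0 by (simp add: t_def)
  have "(2 * t * a + t * t * b) * ((b + 1) * (b + 1)) = 2 * a * (t * (b + 1)) * (b + 1) + (t * (b + 1)) * (t * (b + 1)) * b"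
    by (simp add: algebra_simps)
  also have "\<dots> = - (a * a * (b + 2))" unfolding tb by (simp add: algebra_simps)
  finally have e: "(2 * t * a + t * t * b) * ((b + 1) * (b + 1)) = - (a * a * (b + 2))" .
  have "0 \<le> (2 * t * a + t * t * b) * ((b + 1) * (b + 1))" using n0 b0 by simp
  then have "a * a * (b + 2) \<le> 0" using e by linarith
  then have "a * a \<le> 0" using b0 by (simp add: mult_le_0_iff)
  then have "a = 0" by (metis mult_eq_0_iff not_square_less_zero order_le_less)
  then show ?thesis by (simp add: a_def z_def)
qed

lemma quad_diag:
  "(transpose M ** S ** M) $ i $ i = column i M \<bullet> (S *v column i (M::real^'a^'b))"
  apply (simp add: matrix_matrix_mult_def matrix_vector_mult_def inner_vec_def transpose_def column_def
      sum_distrib_left sum_distrib_right mult_ac)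
  apply (subst sum.swap)
  apply (simp add: mult_ac)
  done

lemma psd_sqrt_unique:
  fixes S T :: "real^'k^'k"
  assumes S: "psd S" and T: "psd T" and eq: "S ** S = T ** T"
  shows "S = T"
proof -
  define X where "X = S - T"
  have Ss: "transpose S = S" and Ts: "transpose T = T" using S T by (auto simp: psd_def)
  have Xs: "transpose X = X" by (simp add: X_def transpose_diff Ss Ts)
  have SX: "S ** X = - (X ** T)"
    using eq by (simp add: X_def matrix_diff_ldistrib matrix_diff_rdistrib matrix_mul_assoc)
  have dS: "(X ** S ** X) $ i $ i = column i X \<bullet> (S *v column i X)" for i
    using quad_diag[of X S i] Xs by simp
  have dT: "(X ** T ** X) $ i $ i = column i X \<bullet> (T *v column i X)" for i
    using quad_diag[of X T i] Xs by simp
  have nS: "0 \<le> (X ** S ** X) $ i $ i" for i using dS S by (simp add: psd_def)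
  have nT: "0 \<le> (X ** T ** X) $ i $ i" for i using dT T by (simp add: psd_def)
  have "trace (X ** S ** X) = - trace (X ** T ** X)"
  proof -
    have "X ** S ** X = - ((X ** X) ** T)"
      by (simp add: matrix_mul_assoc[symmetric] SX matrix_neg_right)
    then have "trace (X ** S ** X) = - trace ((X ** X) ** T)"
      by (simp add: trace_def sum_negf)
    also have "trace ((X ** X) ** T) = trace (T ** (X ** X))" by (rule trace_mul_sym)
    also have "\<dots> = trace ((T ** X) ** X)" by (simp add: matrix_mul_assoc)
    also have "\<dots> = trace (X ** (T ** X))" by (rule trace_mul_sym)
    also have "\<dots> = trace (X ** T ** X)" by (simp add: matrix_mul_assoc)
    finally show ?thesis .
  qed
  moreover have "0 \<le> trace (X ** S ** X)" unfolding trace_def by (rule sum_nonneg) (use nS in auto)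
  moreover have "0 \<le> trace (X ** T ** X)" unfolding trace_def by (rule sum_nonneg) (use nT in auto)
  ultimately have t0: "trace (X ** S ** X) = 0" "trace (X ** T ** X) = 0" by linarith+
  have "(X ** S ** X) $ i $ i = 0" for i
    using t0(1) nS unfolding trace_def by (simp add: sum_nonneg_eq_0_iff)
  then have cS: "S *v column i X = 0" for i using dS[of i] by (intro psd_quad_zero[OF S]) simp
  have "(X ** T ** X) $ i $ i = 0" for i
    using t0(2) nT unfolding trace_def by (simp add: sum_nonneg_eq_0_iff)
  then have cT: "T *v column i X = 0" for i using dT[of i] by (intro psd_quad_zero[OF T]) simp
  have cX: "X *v column i X = 0" for i using cS cT by (simp add: X_def matrix_vector_mult_diff_rdistrib)
  have "column i X \<bullet> column i X = (X *v column i X) $ i" for i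
  proof -
    have "X $ i $ j = X $ j $ i" for j
    proof -
      have "X $ i $ j = transpose X $ i $ j" using Xs by simp
      then show ?thesis by (simp add: transpose_def)
    qed
    then show ?thesis by (simp add: inner_vec_def column_def matrix_vector_mult_def)
  qed
  then have "column i X = 0" for i using cX by simp
  then have "X = 0" by (simp add: vec_eq_iff column_def)
  then show ?thesis by (simp add: X_def)
qed

lemma psd_sqrt_eq:
  assumes "psd S" "S ** S = A"
  shows "psd_sqrt A = S"
  unfolding psd_sqrt_def
proof (rule the_equality)
  show "psd S \<and> S ** S = A" using assms by simp
  fix S' assume "psd S' \<and> S' ** S' = A"
  then show "S' = S" using psd_sqrt_unique[of S' S] assms by simp
qed

lemma diag_mv: "diag_mat d *v x = (\<chi> i. d $ i * x $ i)"
proof -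
  have "(\<Sum>j\<in>UNIV. (if i = j then d $ i else 0) * x $ j) = d $ i * x $ i" for i
    by (simp add: if_distrib[of "\<lambda>u. u * _"] cong: if_cong)
  then show ?thesis by (simp add: diag_mat_def matrix_vector_mult_def vec_eq_iff)
qed
lemma diag_mm: "diag_mat d ** diag_mat e = diag_mat (\<chi> i. d $ i * e $ i)"
proof -
  have "(\<Sum>k\<in>UNIV. (if i = k then d $ i else 0) * (if k = j then e $ k else 0)) = (if i = j then d $ i * e $ i else 0)" for i j
    by (simp add: if_distrib[of "\<lambda>u. u * _"] cong: if_cong)
  then show ?thesis by (simp add: diag_mat_def matrix_matrix_mult_def vec_eq_iff)
qed
lemma diag_add: "diag_mat d + diag_mat e = diag_mat (\<chi> i. d $ i + e $ i)"
  by (simp add: diag_mat_def vec_eq_iff)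
lemma diag_diff: "diag_mat d - diag_mat e = diag_mat (\<chi> i. d $ i - e $ i)"
  by (simp add: diag_mat_def vec_eq_iff)
lemma mat1_diag: "mat 1 = diag_mat (\<chi> i. 1)"
  by (simp add: diag_mat_def mat_def vec_eq_iff)

lemma transpose_diag: "transpose (diag_mat d) = diag_mat d"
  by (simp add: diag_mat_def transpose_def vec_eq_iff)

lemma psd_diag: "(\<And>i. 0 \<le> d $ i) \<Longrightarrow> psd (diag_mat d)"
  unfolding psd_def transpose_diag diag_mv
proof (auto simp: inner_vec_def intro!: sum_nonneg)
  fix x :: "real^'a" and k
  assume "\<And>i. 0 \<le> d $ i"
  then have "0 \<le> d $ k * (x $ k * x $ k)" by simp
  then show "0 \<le> x $ k * (d $ k * x $ k)" by (simp add: mult_ac)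
qed

lemma psd_add: "psd A \<Longrightarrow> psd B \<Longrightarrow> psd (A + B)"
  by (simp add: psd_def transpose_add matrix_vector_mult_add_rdistrib inner_add_right)

lemma inner_mat2: "x \<bullet> (A *v y) = (transpose A *v x) \<bullet> (y::real^_)"
  by (metis inner_mat inner_commute)

lemma psd_congr:
  assumes M: "psd M"
  shows "psd (A ** M ** transpose A)"
proof -
  have Ms: "transpose M = M" using M by (simp add: psd_def)
  have "transpose (A ** M ** transpose A) = A ** M ** transpose A"
    by (simp add: matrix_transpose_mul matrix_mul_assoc Ms)
  moreover have "0 \<le> x \<bullet> ((A ** M ** transpose A) *v x)" for x
  proof -
    have "x \<bullet> ((A ** M ** transpose A) *v x) = x \<bullet> (A *v (M *v (transpose A *v x)))"
      by (simp only: matrix_vector_mul_assoc matrix_mul_assoc)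
    also have "\<dots> = (transpose A *v x) \<bullet> (M *v (transpose A *v x))"
      by (rule inner_mat2)
    finally show ?thesis using M by (simp only: psd_def)
  qed
  ultimately show ?thesis by (simp add: psd_def)
qed

lemma matrix_inv_eq:
  fixes A B :: "real^'k^'k"
  assumes "A ** B = mat 1" "B ** A = mat 1"
  shows "matrix_inv A = B"
proof -
  have ex: "\<exists>A'. A ** A' = mat 1 \<and> A' ** A = mat 1" using assms by blast
  define A' where "A' = matrix_inv A"
  have h: "A ** A' = mat 1 \<and> A' ** A = mat 1"
    unfolding A'_def matrix_inv_def by (rule someI_ex[OF ex])
  have "A' = A' ** (A ** B)" using assms by simp
  also have "\<dots> = (A' ** A) ** B" by (simp add: matrix_mul_assoc)
  also have "\<dots> = B" using h by simp
  finally show ?thesis by (simp add: A'_def)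
qed

lemma gradH_T_stack:
  "transpose (gradH G' u) *v stackH G v = v + transpose (jac G' u) *v G v"
proof -
  have "(transpose (gradH G' u) *v stackH G v) $ k = (v + transpose (jac G' u) *v G v) $ k" for k
  proof -
    have "(transpose (gradH G' u) *v stackH G v) $ k
        = (\<Sum>a\<in>UNIV. mat 1 $ a $ k * v $ a) + (\<Sum>b\<in>UNIV. jac G' u $ b $ k * G v $ b)"
      by (simp only: matrix_vector_mult_def transpose_def vec_lambda_beta sum_UNIV_Plus gradH_def stackH_def
           sum.case_distrib sum.simps)
    also have "\<dots> = (v + transpose (jac G' u) *v G v) $ k"
      by (simp add: mat_def matrix_vector_mult_def transpose_def if_distrib[of "\<lambda>x. x * _"] cong: if_cong
          del: transpose_matrix_vector)
    finally show ?thesis .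
  qed
  then show ?thesis by (simp add: vec_eq_iff del: transpose_matrix_vector)
qed

lemma gradH_TT:
  "transpose (gradH G' u) ** gradH G' w = mat 1 + transpose (jac G' u) ** jac G' w"
proof -
  have "(transpose (gradH G' u) ** gradH G' w) $ k $ l = (mat 1 + transpose (jac G' u) ** jac G' w) $ k $ l" for k l
  proof -
    have "(transpose (gradH G' u) ** gradH G' w) $ k $ l
        = (\<Sum>a\<in>UNIV. mat 1 $ a $ k * mat 1 $ a $ l) + (\<Sum>b\<in>UNIV. jac G' u $ b $ k * jac G' w $ b $ l)"
      by (simp only: matrix_matrix_mult_def transpose_def vec_lambda_beta sum_UNIV_Plus gradH_def
           sum.simps)
    also have "\<dots> = (mat 1 + transpose (jac G' u) ** jac G' w) $ k $ l"
      by (simp add: mat_def matrix_matrix_mult_def transpose_def if_distrib[of "\<lambda>x. x * _"] cong: if_cong)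
    finally show ?thesis .
  qed
  then show ?thesis by (simp add: vec_eq_iff)
qed

lemma norm_stack: "(norm (stackH G v))\<^sup>2 = (norm v)\<^sup>2 + (norm (G v))\<^sup>2"
  by (simp only: power2_norm_eq_inner inner_vec_def sum_UNIV_Plus stackH_def vec_lambda_beta sum.simps)


declare transpose_matrix_vector[simp del]

theorem proposition3p1:
  fixes G :: "real^'n \<Rightarrow> real^'m"
    and G' :: "real^'n \<Rightarrow> real^'n \<Rightarrow> real^'m"
    and vref :: "real^'n"
    and Psi :: "real^'r^'m" and Phi :: "real^'r^'n" and lam :: "real^'r"
  assumes deriv: "\<And>v. (G has_derivative G' v) (at v)"
    and cont: "continuous_on UNIV (\<lambda>v. jac G' v)"
    and svd: "jac G' vref = Psi ** diag_mat lam ** transpose Phi"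
    and Psi_orth: "transpose Psi ** Psi = mat 1"
    and Phi_orth: "transpose Phi ** Phi = mat 1"
    and lam_pos: "\<And>i. lam $ i > 0"
  shows
    "(\<forall>\<xi> v. (transpose (Qtilde G' vref) *v stackH G v = \<xi>) \<longleftrightarrow>
        ((mat 1 - Phi ** transpose Phi) *v \<xi> = (mat 1 - Phi ** transpose Phi) *v v \<and>
         (Phi ** transpose Phi) *v \<xi> =
           Phi *v (inv_sqrt (diag_mat lam ** diag_mat lam + mat 1) *v
                    (transpose Phi *v v + diag_mat lam *v (transpose Psi *v G v)))))
     \<and>
     (\<forall>v. rto_weight G G' vref v =
        inverse \<bar>det (transpose (Qtilde G' vref) ** gradH G' v)\<bar> *
        exp (- (1/2) * (norm (G v))\<^sup>2 - (1/2) * (norm (transpose Phi *v v))\<^sup>2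
             + (1/2) * (norm (inv_sqrt (diag_mat lam ** diag_mat lam + mat 1) *v
                    (transpose Phi *v v + diag_mat lam *v (transpose Psi *v G v))))\<^sup>2))
     \<and>
     (\<forall>v. \<bar>det (transpose (Qtilde G' vref) ** gradH G' v)\<bar> =
        \<bar>det (inv_sqrt (diag_mat lam ** diag_mat lam + mat 1))\<bar> *
        \<bar>det (mat 1 + diag_mat lam ** transpose Psi ** jac G' v ** Phi)\<bar>)"
proof -
  define P where "P = Phi"
  define L where "L = diag_mat lam"
  define J where "J = jac G' vref"
  define e where "e = (\<chi> i. sqrt (1 + lam $ i ^ 2))"
  define dv where "dv = (\<chi> i. 1 / e $ i)"
  define E where "E = diag_mat e"
  define D where "D = diag_mat dv"
  define F where "F = E - mat 1"
  define F' where "F' = D - mat 1"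
  have epos: "e $ i > 0" for i by (simp add: e_def add_pos_nonneg)
  have ege: "e $ i \<ge> 1" for i by (simp add: e_def)
  have esq: "e $ i * e $ i = lam $ i * lam $ i + 1" for i
    by (simp add: e_def power2_eq_square[symmetric])
  have Lt: "transpose L = L" by (simp add: L_def transpose_diag)
  have PtP: "transpose P ** P = mat 1" using Phi_orth by (simp add: P_def)
  have Jt: "transpose J = P ** L ** transpose Psi"
    by (simp add: J_def svd matrix_transpose_mul transpose_diag P_def L_def matrix_mul_assoc)
  have JtJ: "transpose J ** J = P ** (L ** L) ** transpose P"
  proof -
    have "transpose J ** J = (P ** L ** transpose Psi) ** (Psi ** L ** transpose P)"
      unfolding Jt by (simp add: J_def svd P_def L_def)
    also have "\<dots> = P ** L ** (transpose Psi ** Psi) ** L ** transpose P"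
      by (simp add: matrix_mul_assoc)
    finally have "transpose J ** J = P ** L ** (transpose Psi ** Psi) ** L ** transpose P" .
    then show ?thesis using Psi_orth by (simp add: matrix_mul_assoc)
  qed
  have LL1: "L ** L + mat 1 = E ** E"
    by (simp add: L_def E_def diag_mm mat1_diag diag_add esq)
  have psdE: "psd E" unfolding E_def by (rule psd_diag) (simp add: less_imp_le epos)
  have sqrtE: "psd_sqrt (L ** L + mat 1) = E" using psd_sqrt_eq[OF psdE] LL1 by simp
  have ED: "E ** D = mat 1" "D ** E = mat 1"
    using epos by (auto simp: E_def D_def dv_def diag_mm mat1_diag less_imp_neq[symmetric] intro!: arg_cong[where f=diag_mat])
  have invD: "inv_sqrt (L ** L + mat 1) = D"
    unfolding inv_sqrt_def sqrtE by (rule matrix_inv_eq) (use ED in auto)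
  define S1 where "S1 = mat 1 + P ** F ** transpose P"
  define T1 where "T1 = mat 1 + P ** F' ** transpose P"
  have A1: "transpose (gradH G' vref) ** gradH G' vref = mat 1 + P ** (L ** L) ** transpose P"
    by (simp add: gradH_TT J_def[symmetric] JtJ)
  have FF: "F + F + F ** F = L ** L"
  proof -
    have "e $ i - 1 + (e $ i - 1) + (e $ i - 1) * (e $ i - 1) = lam $ i * lam $ i" for i
    proof -
      have "(e $ i - 1) * (e $ i - 1) = e $ i * e $ i - 2 * e $ i + 1" by (simp add: algebra_simps)
      then show ?thesis using esq[of i] by linarith
    qed
    then show ?thesis
      by (simp add: F_def E_def L_def mat1_diag diag_mm diag_diff diag_add)
  qed
  have FF': "F + F' + F ** F' = 0"
  proof -
    have "e $ i - 1 + (1 / e $ i - 1) + (e $ i - 1) * (1 / e $ i - 1) = 0" for i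
      using epos[of i] by (simp add: field_simps)
    then have "F + F' + F ** F' = diag_mat (\<chi> i. 0)"
      by (simp add: F_def F'_def E_def D_def dv_def mat1_diag diag_mm diag_diff diag_add)
    then show ?thesis by (simp add: diag_mat_def vec_eq_iff)
  qed
  have F'F: "F' + F + F' ** F = 0"
  proof -
    have "F' ** F = F ** F'"
      by (simp add: F_def F'_def E_def D_def mat1_diag diag_mm diag_diff mult.commute)
    then show ?thesis using FF' by (simp add: algebra_simps)
  qed
  have sqmul: "(mat 1 + P ** X ** transpose P) ** (mat 1 + P ** Y ** transpose P)
      = mat 1 + P ** (X + Y + X ** Y) ** transpose P" for X Y :: "real^'r^'r"
  proof -
    have "(P ** X ** transpose P) ** (P ** Y ** transpose P) = P ** (X ** Y) ** transpose P"
    proof -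
      have "(P ** X ** transpose P) ** (P ** Y ** transpose P) = P ** X ** (transpose P ** P) ** Y ** transpose P"
        by (simp add: matrix_mul_assoc)
      then show ?thesis using PtP by (simp add: matrix_mul_assoc)
    qed
    then show ?thesis
      by (simp add: matrix_add_ldistrib matrix_add_rdistrib add.assoc)
  qed
  have S1sq: "S1 ** S1 = transpose (gradH G' vref) ** gradH G' vref"
    unfolding S1_def A1 sqmul FF ..
  have psdS1: "psd S1"
  proof -
    have "psd (mat 1 :: real^'n^'n)" by (simp only: mat1_diag) (rule psd_diag, simp)
    moreover have "psd F" unfolding F_def E_def mat1_diag diag_diff
      by (rule psd_diag) (simp add: ege)
    ultimately show ?thesis unfolding S1_def by (intro psd_add psd_congr)
  qed
  have sqrtS1: "psd_sqrt (transpose (gradH G' vref) ** gradH G' vref) = S1"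
    using psd_sqrt_eq[OF psdS1 S1sq] .
  have ST: "S1 ** T1 = mat 1" "T1 ** S1 = mat 1"
    unfolding S1_def T1_def sqmul FF' F'F by simp_all
  have invT1: "inv_sqrt (transpose (gradH G' vref) ** gradH G' vref) = T1"
    unfolding inv_sqrt_def sqrtS1 by (rule matrix_inv_eq) (use ST in auto)
  have T1t: "transpose T1 = T1"
  proof -
    have "transpose F' = F'" by (simp add: F'_def D_def mat1_diag diag_diff transpose_diag)
    then show ?thesis by (simp add: T1_def transpose_add matrix_transpose_mul matrix_mul_assoc)
  qed
  have Qt: "transpose (Qtilde G' vref) = T1 ** transpose (gradH G' vref)"
    by (simp add: Qtilde_def invT1 matrix_transpose_mul T1t)
  have T1v: "T1 *v z = z - P *v (transpose P *v z) + P *v (D *v (transpose P *v z))" for z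
    by (simp add: T1_def F'_def matrix_vector_mult_add_rdistrib matrix_vector_mult_diff_rdistrib
        matrix_vector_mul_assoc[symmetric] matrix_vector_mult_diff_distrib del: transpose_matrix_vector)
  define y where "y = (\<lambda>v. transpose P *v v + L *v (transpose Psi *v G v))"
  define u where "u = (\<lambda>v. v - P *v (transpose P *v v))"
  have PtPv: "transpose P *v (P *v x) = x" for x
    by (simp add: matrix_vector_mul_assoc PtP)
  have Jtv: "transpose J *v g = P *v (L *v (transpose Psi *v g))" for g
    by (simp add: Jt matrix_vector_mul_assoc matrix_mul_assoc)
  have QH: "transpose (Qtilde G' vref) *v stackH G v = u v + P *v (D *v y v)" for v
  proof -
    define z where "z = v + transpose J *v G v"
    have "transpose (Qtilde G' vref) *v stackH G v = T1 *v z"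
      by (simp add: Qt z_def matrix_vector_mul_assoc[symmetric] gradH_T_stack J_def)
    moreover have Ptz: "transpose P *v z = y v"
      by (simp add: z_def y_def Jtv matrix_vector_right_distrib PtPv)
    moreover have "z - P *v y v = u v"
      by (simp add: z_def y_def u_def Jtv matrix_vector_right_distrib)
    ultimately show ?thesis by (simp add: T1v)
  qed
  have Ptu: "transpose P *v u v = 0" for v
    by (simp add: u_def matrix_vector_mult_diff_distrib PtPv)
  define Pi where "Pi = P ** transpose P"
  have Pi_v: "Pi *v x = P *v (transpose P *v x)" for x by (simp add: Pi_def matrix_vector_mul_assoc)
  have part1: "(transpose (Qtilde G' vref) *v stackH G v = \<xi>) \<longleftrightarrow>
        ((mat 1 - Pi) *v \<xi> = (mat 1 - Pi) *v v \<and> Pi *v \<xi> = P *v (D *v y v))" for \<xi> v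
  proof -
    have a: "(mat 1 - Pi) *v (u v + P *v x) = u v" for x
      by (simp add: matrix_vector_mult_diff_rdistrib Pi_v matrix_vector_right_distrib Ptu PtPv)
    have b: "(mat 1 - Pi) *v v = u v"
      by (simp add: matrix_vector_mult_diff_rdistrib Pi_v u_def)
    have c: "Pi *v (u v + P *v x) = P *v x" for x
      by (simp add: Pi_v matrix_vector_right_distrib Ptu PtPv)
    have dec: "\<xi> = (mat 1 - Pi) *v \<xi> + Pi *v \<xi>"
      by (simp add: matrix_vector_mult_diff_rdistrib)
    show ?thesis
      unfolding QH
    proof
      assume "u v + P *v (D *v y v) = \<xi>"
      then show "(mat 1 - Pi) *v \<xi> = (mat 1 - Pi) *v v \<and> Pi *v \<xi> = P *v (D *v y v)"
        using a b c by auto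
    next
      assume "(mat 1 - Pi) *v \<xi> = (mat 1 - Pi) *v v \<and> Pi *v \<xi> = P *v (D *v y v)"
      then show "u v + P *v (D *v y v) = \<xi>" using dec b by simp
    qed
  qed
  have part2: "(norm (transpose (Qtilde G' vref) *v stackH G v))\<^sup>2
      = (norm v)\<^sup>2 - (norm (transpose P *v v))\<^sup>2 + (norm (D *v y v))\<^sup>2" for v
  proof -
    define w where "w = D *v y v"
    have uw: "u v \<bullet> (P *v w) = 0" by (simp add: inner_mat2 Ptu)
    have ww: "(P *v w) \<bullet> (P *v w) = w \<bullet> w" by (simp add: inner_mat PtPv)
    have uu: "u v \<bullet> u v = v \<bullet> v - (transpose P *v v) \<bullet> (transpose P *v v)"
    proof -
      have "u v \<bullet> u v = u v \<bullet> v - u v \<bullet> (P *v (transpose P *v v))"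
        by (simp add: u_def inner_diff_right)
      also have "u v \<bullet> (P *v (transpose P *v v)) = 0" by (simp add: inner_mat2 Ptu)
      also have "u v \<bullet> v = v \<bullet> v - (P *v (transpose P *v v)) \<bullet> v"
        by (simp add: u_def inner_diff_left)
      also have "(P *v (transpose P *v v)) \<bullet> v = (transpose P *v v) \<bullet> (transpose P *v v)"
        by (simp add: inner_mat)
      finally show ?thesis by simp
    qed
    show ?thesis
      unfolding QH w_def[symmetric] power2_norm_eq_inner
      using uw ww uu by (simp add: inner_add_left inner_add_right inner_commute)
  qed
  have part3: "\<bar>det (transpose (Qtilde G' vref) ** gradH G' v)\<bar> =
        \<bar>det D\<bar> * \<bar>det (mat 1 + L ** transpose Psi ** jac G' v ** P)\<bar>" for v
  proof -
    define K where "K = L ** transpose Psi ** jac G' v"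
    have "transpose (Qtilde G' vref) ** gradH G' v = T1 ** (mat 1 + P ** K)"
    proof -
      have "transpose (Qtilde G' vref) ** gradH G' v = T1 ** (transpose (gradH G' vref) ** gradH G' v)"
        by (simp add: Qt matrix_mul_assoc)
      also have "\<dots> = T1 ** (mat 1 + P ** K)"
        by (simp add: gradH_TT J_def[symmetric] Jt K_def matrix_mul_assoc)
      finally show ?thesis .
    qed
    moreover have "det (mat 1 + P ** K) = det (mat 1 + K ** P)" by (rule sylvester)
    moreover have "det T1 = det D"
    proof -
      have "det T1 = det (mat 1 + P ** (F' ** transpose P))" by (simp add: T1_def matrix_mul_assoc)
      also have "\<dots> = det (mat 1 + (F' ** transpose P) ** P)" by (rule sylvester)
      also have "(F' ** transpose P) ** P = F'" by (simp add: matrix_mul_assoc[symmetric] PtP)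
      finally show ?thesis by (simp add: F'_def)
    qed
    ultimately show ?thesis by (simp add: det_mul abs_mult K_def)
  qed
  show ?thesis
    unfolding P_def[symmetric] L_def[symmetric] invD
  proof (intro conjI allI)
    fix \<xi> v
    show "(transpose (Qtilde G' vref) *v stackH G v = \<xi>) =
       ((mat 1 - P ** transpose P) *v \<xi> = (mat 1 - P ** transpose P) *v v \<and>
        P ** transpose P *v \<xi> = P *v (D *v (transpose P *v v + L *v (transpose Psi *v G v))))"
      using part1[of v \<xi>] by (simp add: Pi_def y_def)
  next
    fix v
    show "rto_weight G G' vref v =
       inverse \<bar>det (transpose (Qtilde G' vref) ** gradH G' v)\<bar> *
       exp (- (1 / 2) * (norm (G v))\<^sup>2 - 1 / 2 * (norm (transpose P *v v))\<^sup>2 +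
            1 / 2 * (norm (D *v (transpose P *v v + L *v (transpose Psi *v G v))))\<^sup>2)"
      unfolding rto_weight_def norm_stack part2 y_def by (simp add: algebra_simps)
  next
    fix v
    show "\<bar>det (transpose (Qtilde G' vref) ** gradH G' v)\<bar> =
       \<bar>det D\<bar> * \<bar>det (mat 1 + L ** transpose Psi ** jac G' v ** P)\<bar>"
      by (rule part3)
  qed
qed

end
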